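(* Let $n\geqslant 2$ and let $X_1,\dots,X_n$ be independent real random variables with $\mathbb{E}X_j=0$, $\mathbb{E}X_j^2=1$ and finite moments of all orders. Let $\sigma_1,\dots,\sigma_n\geqslant 0$ satisfy $\sigma_1^2+\cdots+\sigma_n^2=1$ and $\sigma_j^2<1$ for all $j$. Put $S_n=\sigma_1X_1+\cdots+\sigma_nX_n$ and, for each $k$, $S_{n;k}=\dfrac{S_n-\sigma_kX_k}{\sqrt{1-\sigma_k^2}}$. Then for all $m\geqslant 1$, \[ \mathbb{E}H_m(S_n)=\sum_{k=1}^n\frac1m\sum_{j=1}^m\binom{m}{j}\,\mathbb{E}H_{m-j}(S_{n;k})\; j\,\mathbb{E}H_j(X_k)\,(1-\sigma_k^2)^{(m-j)/2}\sigma_k^{\,j}. \]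
   Context: The Hermite polynomials $H_n$ ($n\geqslant 0$) are defined by the generating function $\sum_{n=0}^\infty \frac{H_n(x)}{n!}z^n=e^{xz-z^2/2}$; e.g. $H_0=1$, $H_1(x)=x$, $H_2(x)=x^2-1$, $H_3(x)=x^3-3x$. *)

theory Defs
  imports "HOL-Probability.Probability" "HOL-Computational_Algebra.Formal_Power_Series"
begin

text \<open>Probabilists' Hermite polynomials, defined by the generating function
  sum_n H_n(x)/n! z^n = exp(x z - z^2/2) = exp(x z) * exp(-z^2/2), read as an identity of
  formal power series in z: H_n(x) = n! * [z^n] (exp(x z) * (exp(-z/2) composed with z^2)).\<close>
definition hermite :: "nat \<Rightarrow> real \<Rightarrow> real" where
  "hermite n x = fact n * fps_nth (fps_exp x * (fps_exp (-1/2) oo fps_X ^ 2)) n"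

end

theory Submission imports Defs begin


definition Gc :: "real \<Rightarrow> real fps" where "Gc c = fps_exp c oo fps_X ^ 2"
definition Ef :: "real \<Rightarrow> real fps" where "Ef x = fps_exp x * Gc (-1/2)"
definition Lf :: "real \<Rightarrow> real fps" where "Lf c = fps_const c * fps_X"

lemma hermite_Ef: "hermite n x = fact n * fps_nth (Ef x) n"
  by (simp add: hermite_def Ef_def Gc_def)

lemma Lf0[simp]: "fps_nth (Lf c) 0 = 0" by (simp add: Lf_def)
lemma X20[simp]: "fps_nth (fps_X ^ 2 :: real fps) 0 = 0" by simp

lemma Gc_mult: "Gc c * Gc d = Gc (c + d)"
  unfolding Gc_def by (simp add: fps_compose_mult_distrib[symmetric] fps_exp_add_mult)

lemma Gc_L: "Gc c oo Lf a = Gc (a^2 * c)"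
proof -
  have 1: "fps_X ^ 2 oo Lf a = fps_const (a^2) * fps_X ^ 2"
    using fps_compose_power[of "Lf a" fps_X 2] by (simp add: Lf_def power_mult_distrib)
  have 2: "fps_const (a^2) * fps_X ^ 2 = Lf (a^2) oo fps_X ^ 2"
    by (simp add: Lf_def fps_compose_mult_distrib)
  have "Gc c oo Lf a = fps_exp c oo (fps_X ^ 2 oo Lf a)"
    unfolding Gc_def by (rule fps_compose_assoc[symmetric]) simp_all
  also have "\<dots> = (fps_exp c oo Lf (a^2)) oo fps_X ^ 2"
    unfolding 1 2 by (rule fps_compose_assoc) simp_all
  also have "\<dots> = Gc (a^2 * c)" by (simp add: Lf_def Gc_def)
  finally show ?thesis .
qed

lemma Ef_L: "Ef u oo Lf a = fps_exp (a * u) * Gc (- (a^2) / 2)"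
  unfolding Ef_def by (simp add: fps_compose_mult_distrib Gc_L) (simp add: Lf_def)

lemma Ef_add: assumes "a^2 + b^2 = 1"
  shows "(Ef u oo Lf a) * (Ef v oo Lf b) = Ef (a * u + b * v)"
proof -
  have e: "- (a^2) / 2 + - (b^2) / 2 = -1/2" using assms by (simp add: field_simps)
  have "(Ef u oo Lf a) * (Ef v oo Lf b) = (fps_exp (a * u) * fps_exp (b * v)) * (Gc (- (a^2) / 2) * Gc (- (b^2) / 2))"
    unfolding Ef_L by (simp add: algebra_simps)
  also have "\<dots> = fps_exp (a * u + b * v) * Gc (-1/2)"
    by (simp only: Gc_mult fps_exp_add_mult[symmetric] e)
  finally show ?thesis by (simp add: Ef_def)
qed

lemma Gc_deriv: "fps_deriv (Gc c) = fps_const (2 * c) * fps_X * Gc c"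
proof -
  have "fps_deriv (fps_X ^ 2 :: real fps) = fps_const 2 * fps_X"
    by (simp add: power2_eq_square fps_eq_iff fps_numeral_nth)
  then show ?thesis unfolding Gc_def by (simp add: fps_compose_deriv fps_compose_mult_distrib)
qed


lemma Ef_deriv: "fps_deriv (Ef s) = (fps_const s - fps_X) * Ef s"
proof -
  have e: "fps_const (2 * (-1/2)) = (-1 :: real fps)" by (simp del: fps_const_neg add: fps_const_neg[symmetric])
  show ?thesis unfolding Ef_def fps_deriv_mult fps_exp_deriv Gc_deriv e
    by (simp del: fps_const_neg add: algebra_simps)
qed

lemma EfL_deriv: "fps_deriv (Ef v oo Lf b) = (fps_const (b * v) - fps_const (b^2) * fps_X) * (Ef v oo Lf b)"
proof -
  have e: "fps_const (2 * (- (b^2) / 2)) = - fps_const (b^2)" by (simp del: fps_const_neg add: fps_const_neg[symmetric])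
  show ?thesis unfolding Ef_L fps_deriv_mult fps_exp_deriv Gc_deriv e
    by (simp del: fps_const_neg add: algebra_simps)
qed

definition hal :: "nat \<Rightarrow> nat \<Rightarrow> real \<Rightarrow> real" where
  "hal k m s = fact m * fps_nth (fps_X ^ k * Ef s) m"

lemma P2: assumes "m \<ge> 1" shows "s * hal 1 m s - hal 2 m s = real m * hermite m s"
proof -
  have "fps_const s * (fps_X ^ 1 * Ef s) - fps_X ^ 2 * Ef s = fps_X * fps_deriv (Ef s)"
    by (simp add: Ef_deriv algebra_simps power2_eq_square)
  then have "s * fps_nth (fps_X ^ 1 * Ef s) m - fps_nth (fps_X ^ 2 * Ef s) m = fps_nth (fps_X * fps_deriv (Ef s)) m"
    by (metis fps_mult_left_const_nth fps_sub_nth)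
  also have "\<dots> = real m * fps_nth (Ef s) m" using assms by simp
  finally have "s * fps_nth (fps_X ^ 1 * Ef s) m - fps_nth (fps_X ^ 2 * Ef s) m = real m * fps_nth (Ef s) m" .
  then have "fact m * (s * fps_nth (fps_X ^ 1 * Ef s) m - fps_nth (fps_X ^ 2 * Ef s) m) = fact m * (real m * fps_nth (Ef s) m)"
    by simp
  then show ?thesis unfolding hal_def hermite_Ef by (simp add: algebra_simps)
qed

lemma P1: assumes ab: "a^2 + b^2 = 1"
  shows "(\<Sum>j=1..m. real (m choose j) * hermite (m - j) u * real j * hermite j v * a^(m-j) * b^j)
     = b * v * hal 1 m (a * u+b * v) - b^2 * hal 2 m (a * u+b * v)"
proof -
  define A where "A = Ef u oo Lf a"
  define B where "B = Ef v oo Lf b"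
  have key: "A * (fps_X * fps_deriv B) = fps_const (b * v) * (fps_X ^ 1 * Ef (a * u+b * v)) - fps_const (b^2) * (fps_X ^ 2 * Ef (a * u+b * v))"
    unfolding B_def EfL_deriv Ef_add[OF ab, symmetric] A_def by (simp add: algebra_simps power2_eq_square)
  have "fps_nth (A * (fps_X * fps_deriv B)) m = (\<Sum>i=0..m. fps_nth A i * fps_nth (fps_X * fps_deriv B) (m - i))"
    by (rule fps_mult_nth)
  also have "\<dots> = (\<Sum>i=0..m. a^i * fps_nth (Ef u) i * (real (m - i) * b^(m-i) * fps_nth (Ef v) (m-i)))"
  proof (rule sum.cong)
    fix i assume "i \<in> {0..m}"
    then have i: "i \<le> m" by simp
    show "fps_nth A i * fps_nth (fps_X * fps_deriv B) (m - i) = a^i * fps_nth (Ef u) i * (real (m - i) * b^(m-i) * fps_nth (Ef v) (m-i))"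
    proof (cases "i = m")
      case False
      then have e: "Suc (m - Suc i) = m - i" using i by simp
      show ?thesis using False i unfolding A_def B_def Lf_def
        by (simp add: e of_nat_diff)
    qed (simp add: A_def B_def Lf_def)
  qed simp
  finally have c1: "fps_nth (A * (fps_X * fps_deriv B)) m = \<dots>" .
  have "(\<Sum>j=1..m. real (m choose j) * hermite (m - j) u * real j * hermite j v * a^(m-j) * b^j)
      = (\<Sum>j=0..m. real (m choose j) * hermite (m - j) u * real j * hermite j v * a^(m-j) * b^j)"
    by (simp add: sum.atLeast_Suc_atMost)
  also have "\<dots> = (\<Sum>i=0..m. real (m choose (m - i)) * hermite (m - (m - i)) u * real (m - i) * hermite (m - i) v * a^(m-(m - i)) * b^(m - i))"
    by (subst sum.atLeastAtMost_rev) simp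
  also have "\<dots> = (\<Sum>i=0..m. fact m * (a^i * fps_nth (Ef u) i * (real (m - i) * b^(m-i) * fps_nth (Ef v) (m-i))))"
  proof (rule sum.cong)
    fix i assume "i \<in> {0..m}"
    then have i: "i \<le> m" by simp
    then have c: "real (m choose (m - i)) * fact i * fact (m - i) = fact m"
      by (simp add: binomial_fact)
    have mi: "m - (m - i) = i" using i by simp
    show "real (m choose (m - i)) * hermite (m - (m - i)) u * real (m - i) * hermite (m - i) v * a^(m-(m - i)) * b^(m - i)
      = fact m * (a^i * fps_nth (Ef u) i * (real (m - i) * b^(m-i) * fps_nth (Ef v) (m-i)))"
      unfolding hermite_Ef mi c[symmetric] by (simp only: mult_ac)
  qed simp
  also have "\<dots> = fact m * fps_nth (A * (fps_X * fps_deriv B)) m"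
    unfolding c1 by (simp add: sum_distrib_left)
  also have "\<dots> = b * v * hal 1 m (a * u+b * v) - b^2 * hal 2 m (a * u+b * v)"
    unfolding key hal_def fps_sub_nth fps_mult_left_const_nth by (simp add: algebra_simps)
  finally show ?thesis .
qed


definition polyfun :: "(real \<Rightarrow> real) \<Rightarrow> bool" where
  "polyfun f \<longleftrightarrow> (\<exists>N c. \<forall>x. f x = (\<Sum>i\<le>N. c i * x ^ i))"

lemma polyfun_Ef: "polyfun (\<lambda>s. fps_nth (Ef s) k)"
  unfolding polyfun_def
proof (intro exI allI)
  fix x
  show "fps_nth (Ef x) k = (\<Sum>i\<le>k. (fps_nth (Gc (-1/2)) (k - i) / fact i) * x ^ i)"
    unfolding Ef_def fps_mult_nth atLeast0AtMost by (intro sum.cong) auto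
qed

lemma polyfun_cmult: "polyfun f \<Longrightarrow> polyfun (\<lambda>x. c * f x)"
  unfolding polyfun_def
proof (elim exE)
  fix N d assume "\<forall>x. f x = (\<Sum>i\<le>N. d i * x ^ i)"
  then show "\<exists>N c'. \<forall>x. c * f x = (\<Sum>i\<le>N. c' i * x ^ i)"
    by (intro exI[of _ N] exI[of _ "\<lambda>i. c * d i"]) (simp add: sum_distrib_left mult.assoc)
qed

lemma polyfun_zero: "polyfun (\<lambda>x. 0)"
  unfolding polyfun_def by (intro exI[of _ 0] exI[of _ "\<lambda>i. 0"]) simp

lemma polyfun_hermite: "polyfun (hermite n)"
  unfolding hermite_Ef by (rule polyfun_cmult[OF polyfun_Ef])

lemma polyfun_hal: "polyfun (hal k m)"
proof (cases "m < k")
  case True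
  then have "hal k m = (\<lambda>x. 0)" by (simp add: hal_def fps_X_power_mult_nth fun_eq_iff)
  then show ?thesis by (simp add: polyfun_zero)
next
  case False
  then have "hal k m = (\<lambda>x. fact m * fps_nth (Ef x) (m - k))" by (simp add: hal_def fps_X_power_mult_nth fun_eq_iff)
  then show ?thesis by (simp add: polyfun_cmult[OF polyfun_Ef])
qed

lemma polyfun_measurable: "polyfun f \<Longrightarrow> f \<in> borel_measurable borel"
  unfolding polyfun_def
proof (elim exE)
  fix N c assume "\<forall>x. f x = (\<Sum>i\<le>N. c i * x ^ i)"
  then have "f = (\<lambda>x. \<Sum>i\<le>N. c i * x ^ i)" by auto
  then show ?thesis by simp
qed

definition mom :: "'a measure \<Rightarrow> ('a \<Rightarrow> real) \<Rightarrow> bool" where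
  "mom M Y \<longleftrightarrow> (\<forall>p. integrable M (\<lambda>\<omega>. Y \<omega> ^ p))"

lemma mom_int: "mom M Y \<Longrightarrow> integrable M Y"
  unfolding mom_def by (erule allE[of _ 1]) simp

lemma mom_meas: "mom M Y \<Longrightarrow> Y \<in> borel_measurable M"
  using mom_int by blast

lemma (in prob_space) mom_const: "mom M (\<lambda>_. c)"
  unfolding mom_def by simp

lemma abs_le_sq: "\<bar>p * q :: real\<bar> \<le> p^2 + q^2"
proof -
  have "0 \<le> (\<bar>p\<bar> - \<bar>q\<bar>)^2" by simp
  then have "2 * (\<bar>p\<bar> * \<bar>q\<bar>) \<le> p^2 + q^2" by (simp add: power2_diff)
  moreover have "0 \<le> \<bar>p\<bar> * \<bar>q\<bar>" by simp
  ultimately show ?thesis unfolding abs_mult by linarith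
qed

lemma mom_prod_int: assumes "mom M Y" "mom M Z"
  shows "integrable M (\<lambda>\<omega>. Y \<omega> ^ i * Z \<omega> ^ j)"
proof (rule Bochner_Integration.integrable_bound)
  show "integrable M (\<lambda>\<omega>. (Y \<omega> ^ i)^2 + (Z \<omega> ^ j)^2)"
    using assms unfolding mom_def power_mult[symmetric] by auto
  show "(\<lambda>\<omega>. Y \<omega> ^ i * Z \<omega> ^ j) \<in> borel_measurable M"
    using mom_meas[OF assms(1)] mom_meas[OF assms(2)] by measurable
  show "AE x in M. norm (Y x ^ i * Z x ^ j) \<le> norm ((Y x ^ i)^2 + (Z x ^ j)^2)"
  proof (intro AE_I2)
    fix x
    have "\<bar>Y x ^ i * Z x ^ j\<bar> \<le> (Y x ^ i)^2 + (Z x ^ j)^2"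
      by (rule abs_le_sq)
    then show "norm (Y x ^ i * Z x ^ j) \<le> norm ((Y x ^ i)^2 + (Z x ^ j)^2)"
      by simp
  qed
qed

lemma mom_add: assumes "mom M Y" "mom M Z" shows "mom M (\<lambda>\<omega>. Y \<omega> + Z \<omega>)"
  unfolding mom_def
proof
  fix p
  have "(\<lambda>\<omega>. (Y \<omega> + Z \<omega>) ^ p) = (\<lambda>\<omega>. \<Sum>k\<le>p. real (p choose k) * (Y \<omega> ^ k * Z \<omega> ^ (p - k)))"
    by (simp add: binomial_ring mult.assoc)
  moreover have "integrable M (\<lambda>\<omega>. \<Sum>k\<le>p. real (p choose k) * (Y \<omega> ^ k * Z \<omega> ^ (p - k)))"
    using mom_prod_int[OF assms] by auto
  ultimately show "integrable M (\<lambda>\<omega>. (Y \<omega> + Z \<omega>) ^ p)" by simp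
qed

lemma mom_mult: assumes "mom M Y" "mom M Z" shows "mom M (\<lambda>\<omega>. Y \<omega> * Z \<omega>)"
  unfolding mom_def power_mult_distrib using mom_prod_int[OF assms] by blast

lemma (in prob_space) mom_sum: "(\<And>i. i \<in> I \<Longrightarrow> mom M (Y i)) \<Longrightarrow> mom M (\<lambda>\<omega>. \<Sum>i\<in>I. Y i \<omega>)"
proof (induction I rule: infinite_finite_induct)
  case (insert x F)
  then show ?case using mom_add[of M "Y x" "\<lambda>\<omega>. \<Sum>i\<in>F. Y i \<omega>"] by simp
qed (simp_all add: mom_const)

lemma (in prob_space) mom_power: "mom M Y \<Longrightarrow> mom M (\<lambda>\<omega>. Y \<omega> ^ k)"
  by (induction k) (simp_all add: mom_const mom_mult)

lemma (in prob_space) mom_poly: assumes "polyfun f" "mom M Y" shows "mom M (\<lambda>\<omega>. f (Y \<omega>))"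
proof -
  obtain N c where "\<forall>x. f x = (\<Sum>i\<le>N. c i * x ^ i)" using assms(1) unfolding polyfun_def by blast
  then have "(\<lambda>\<omega>. f (Y \<omega>)) = (\<lambda>\<omega>. \<Sum>i\<le>N. c i * Y \<omega> ^ i)" by auto
  moreover have "mom M (\<lambda>\<omega>. \<Sum>i\<le>N. c i * Y \<omega> ^ i)"
    by (intro mom_sum mom_mult mom_const mom_power assms(2))
  ultimately show ?thesis by simp
qed

lemma powr_half_n: assumes "(x::real) > 0" shows "x powr (real n / 2) = sqrt x ^ n"
  using assms by (simp add: powr_half_sqrt[symmetric] powr_realpow[symmetric] powr_powr)


lemma (in prob_space) mom_diff: assumes "mom M Y" "mom M Z" shows "mom M (\<lambda>\<omega>. Y \<omega> - Z \<omega>)"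
  using mom_add[OF assms(1) mom_mult[OF mom_const[of "-1"] assms(2)]] by simp

theorem theorem4:
  fixes M :: "'a measure" and X :: "nat \<Rightarrow> 'a \<Rightarrow> real" and \<sigma> :: "nat \<Rightarrow> real"
    and n m :: nat
  assumes "prob_space M"
    and "n \<ge> 2"
    and "\<And>j. j \<in> {1..n} \<Longrightarrow> X j \<in> borel_measurable M"
    and "prob_space.indep_vars M (\<lambda>_. borel) X {1..n}"
    and "\<And>j. j \<in> {1..n} \<Longrightarrow> integral\<^sup>L M (X j) = 0"
    and "\<And>j. j \<in> {1..n} \<Longrightarrow> integral\<^sup>L M (\<lambda>\<omega>. (X j \<omega>) ^ 2) = 1"
    and "\<And>j p. j \<in> {1..n} \<Longrightarrow> integrable M (\<lambda>\<omega>. (X j \<omega>) ^ p)"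
    and "\<And>j. j \<in> {1..n} \<Longrightarrow> \<sigma> j \<ge> 0"
    and "(\<Sum>j=1..n. (\<sigma> j)^2) = 1"
    and "\<And>j. j \<in> {1..n} \<Longrightarrow> (\<sigma> j)^2 < 1"
    and "m \<ge> 1"
  shows "integral\<^sup>L M (\<lambda>\<omega>. hermite m (\<Sum>i=1..n. \<sigma> i * X i \<omega>)) =
    (\<Sum>k=1..n. (1 / real m) * (\<Sum>j=1..m. real (m choose j)
        * integral\<^sup>L M (\<lambda>\<omega>. hermite (m - j)
            (((\<Sum>i=1..n. \<sigma> i * X i \<omega>) - \<sigma> k * X k \<omega>) / sqrt (1 - (\<sigma> k)^2)))
        * real j * integral\<^sup>L M (\<lambda>\<omega>. hermite j (X k \<omega>))
        * (1 - (\<sigma> k)^2) powr (real (m - j) / 2) * (\<sigma> k) ^ j))"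
proof -
  interpret prob_space M by (rule assms(1))
  define S where "S = (\<lambda>\<omega>. \<Sum>i=1..n. \<sigma> i * X i \<omega>)"
  define U where "U = (\<lambda>k \<omega>. ((\<Sum>i=1..n. \<sigma> i * X i \<omega>) - \<sigma> k * X k \<omega>) / sqrt (1 - (\<sigma> k)^2))"
  have momX: "\<And>k. k \<in> {1..n} \<Longrightarrow> mom M (X k)" using assms(7) unfolding mom_def by blast
  have momS: "mom M S" unfolding S_def by (intro mom_sum mom_mult mom_const momX)
  have momU: "mom M (U k)" if k: "k \<in> {1..n}" for k
  proof -
    have "U k = (\<lambda>\<omega>. (1 / sqrt (1 - (\<sigma> k)^2)) * S \<omega> - (\<sigma> k / sqrt (1 - (\<sigma> k)^2)) * X k \<omega>)"
      by (simp add: U_def S_def fun_eq_iff diff_divide_distrib)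
    show ?thesis unfolding \<open>U k = _\<close> by (intro mom_diff mom_mult mom_const momX momS k)
  qed
  have apos: "0 < 1 - (\<sigma> k)^2" if "k \<in> {1..n}" for k using assms(10)[OF that] by simp
  have ab: "(sqrt (1 - (\<sigma> k)^2))^2 + (\<sigma> k)^2 = 1" if "k \<in> {1..n}" for k
    using apos[OF that] by simp
  have decomp: "sqrt (1 - (\<sigma> k)^2) * U k \<omega> + \<sigma> k * X k \<omega> = S \<omega>" if "k \<in> {1..n}" for k \<omega>
    using apos[OF that] by (simp add: U_def S_def)
  have indep: "indep_var borel (X k) borel (U k)" if k: "k \<in> {1..n}" for k
  proof -
    have "indep_var borel ((\<lambda>f. f k) \<circ> (\<lambda>\<omega>. restrict (\<lambda>i. X i \<omega>) {k}))
       borel ((\<lambda>f. (\<Sum>i\<in>{1..n}-{k}. \<sigma> i * f i) / sqrt (1 - (\<sigma> k)^2)) \<circ> (\<lambda>\<omega>. restrict (\<lambda>i. X i \<omega>) ({1..n}-{k})))"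
      using k by (intro indep_var_compose[OF indep_var_restrict[OF assms(4)]]) auto
    also have "((\<lambda>f. f k) \<circ> (\<lambda>\<omega>. restrict (\<lambda>i. X i \<omega>) {k})) = X k" by auto
    also have "((\<lambda>f. (\<Sum>i\<in>{1..n}-{k}. \<sigma> i * f i) / sqrt (1 - (\<sigma> k)^2)) \<circ> (\<lambda>\<omega>. restrict (\<lambda>i. X i \<omega>) ({1..n}-{k}))) = U k"
    proof
      fix \<omega>
      have "(\<Sum>i=1..n. \<sigma> i * X i \<omega>) = \<sigma> k * X k \<omega> + (\<Sum>i\<in>{1..n}-{k}. \<sigma> i * X i \<omega>)"
        using k by (simp add: sum.remove)
      then show "((\<lambda>f. (\<Sum>i\<in>{1..n}-{k}. \<sigma> i * f i) / sqrt (1 - (\<sigma> k)^2)) \<circ> (\<lambda>\<omega>. restrict (\<lambda>i. X i \<omega>) ({1..n}-{k}))) \<omega> = U k \<omega>"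
        by (simp add: U_def)
    qed
    finally show ?thesis .
  qed
  have momH: "\<And>p Y. mom M Y \<Longrightarrow> mom M (\<lambda>\<omega>. hermite p (Y \<omega>))" by (rule mom_poly[OF polyfun_hermite])
  have momHal: "\<And>p q Y. mom M Y \<Longrightarrow> mom M (\<lambda>\<omega>. hal p q (Y \<omega>))" by (rule mom_poly[OF polyfun_hal])
  have Hmeas: "\<And>p. hermite p \<in> borel_measurable borel" by (rule polyfun_measurable[OF polyfun_hermite])
  have inner: "(\<Sum>j=1..m. real (m choose j) * integral\<^sup>L M (\<lambda>\<omega>. hermite (m - j) (U k \<omega>)) * real j
        * integral\<^sup>L M (\<lambda>\<omega>. hermite j (X k \<omega>)) * (1 - (\<sigma> k)^2) powr (real (m - j) / 2) * (\<sigma> k) ^ j)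
     = integral\<^sup>L M (\<lambda>\<omega>. \<sigma> k * X k \<omega> * hal 1 m (S \<omega>) - (\<sigma> k)^2 * hal 2 m (S \<omega>))" if k: "k \<in> {1..n}" for k
  proof -
    let ?a = "sqrt (1 - (\<sigma> k)^2)"
    have termj: "real (m choose j) * integral\<^sup>L M (\<lambda>\<omega>. hermite (m - j) (U k \<omega>)) * real j
        * integral\<^sup>L M (\<lambda>\<omega>. hermite j (X k \<omega>)) * (1 - (\<sigma> k)^2) powr (real (m - j) / 2) * (\<sigma> k) ^ j
      = integral\<^sup>L M (\<lambda>\<omega>. real (m choose j) * hermite (m - j) (U k \<omega>) * real j * hermite j (X k \<omega>) * ?a^(m-j) * (\<sigma> k)^j)" for j
    proof -
      have ind2: "indep_var borel (\<lambda>\<omega>. hermite j (X k \<omega>)) borel (\<lambda>\<omega>. hermite (m-j) (U k \<omega>))"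
        using indep_var_compose[OF indep[OF k] Hmeas Hmeas] by (simp add: comp_def)
      have e: "integral\<^sup>L M (\<lambda>\<omega>. hermite j (X k \<omega>) * hermite (m-j) (U k \<omega>))
          = integral\<^sup>L M (\<lambda>\<omega>. hermite j (X k \<omega>)) * integral\<^sup>L M (\<lambda>\<omega>. hermite (m-j) (U k \<omega>))"
        by (rule indep_var_lebesgue_integral[OF ind2 mom_int[OF momH[OF momX[OF k]]] mom_int[OF momH[OF momU[OF k]]]])
      have "(\<lambda>\<omega>. real (m choose j) * hermite (m - j) (U k \<omega>) * real j * hermite j (X k \<omega>) * ?a^(m-j) * (\<sigma> k)^j)
         = (\<lambda>\<omega>. (real (m choose j) * real j * ?a^(m-j) * (\<sigma> k)^j) * (hermite j (X k \<omega>) * hermite (m-j) (U k \<omega>)))"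
        by (simp only: mult_ac)
      then have "integral\<^sup>L M (\<lambda>\<omega>. real (m choose j) * hermite (m - j) (U k \<omega>) * real j * hermite j (X k \<omega>) * ?a^(m-j) * (\<sigma> k)^j)
          = (real (m choose j) * real j * ?a^(m-j) * (\<sigma> k)^j) * (integral\<^sup>L M (\<lambda>\<omega>. hermite j (X k \<omega>)) * integral\<^sup>L M (\<lambda>\<omega>. hermite (m-j) (U k \<omega>)))"
        by (simp only: integral_mult_right_zero e)
      then show ?thesis by (simp only: powr_half_n[OF apos[OF k], of "m-j"] mult_ac)
    qed
    have "(\<Sum>j=1..m. real (m choose j) * integral\<^sup>L M (\<lambda>\<omega>. hermite (m - j) (U k \<omega>)) * real j
        * integral\<^sup>L M (\<lambda>\<omega>. hermite j (X k \<omega>)) * (1 - (\<sigma> k)^2) powr (real (m - j) / 2) * (\<sigma> k) ^ j)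
      = (\<Sum>j=1..m. integral\<^sup>L M (\<lambda>\<omega>. real (m choose j) * hermite (m - j) (U k \<omega>) * real j * hermite j (X k \<omega>) * ?a^(m-j) * (\<sigma> k)^j))"
      by (rule sum.cong[OF refl termj])
    also have "\<dots> = integral\<^sup>L M (\<lambda>\<omega>. \<Sum>j=1..m. real (m choose j) * hermite (m - j) (U k \<omega>) * real j * hermite j (X k \<omega>) * ?a^(m-j) * (\<sigma> k)^j)"
      by (rule Bochner_Integration.integral_sum[symmetric]) (intro mom_int mom_mult mom_const momH momX momU k)
    also have "\<dots> = integral\<^sup>L M (\<lambda>\<omega>. \<sigma> k * X k \<omega> * hal 1 m (S \<omega>) - (\<sigma> k)^2 * hal 2 m (S \<omega>))"
      by (rule Bochner_Integration.integral_cong[OF refl]) (simp only: P1[OF ab[OF k]] decomp[OF k])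
    finally show ?thesis .
  qed
  have "(\<Sum>k=1..n. (1 / real m) * (\<Sum>j=1..m. real (m choose j) * integral\<^sup>L M (\<lambda>\<omega>. hermite (m - j) (U k \<omega>)) * real j
        * integral\<^sup>L M (\<lambda>\<omega>. hermite j (X k \<omega>)) * (1 - (\<sigma> k)^2) powr (real (m - j) / 2) * (\<sigma> k) ^ j))
     = (\<Sum>k=1..n. (1 / real m) * integral\<^sup>L M (\<lambda>\<omega>. \<sigma> k * X k \<omega> * hal 1 m (S \<omega>) - (\<sigma> k)^2 * hal 2 m (S \<omega>)))"
    by (rule sum.cong[OF refl]) (simp only: inner)
  also have "\<dots> = (1 / real m) * integral\<^sup>L M (\<lambda>\<omega>. \<Sum>k=1..n. \<sigma> k * X k \<omega> * hal 1 m (S \<omega>) - (\<sigma> k)^2 * hal 2 m (S \<omega>))"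
    unfolding sum_distrib_left[symmetric]
    by (subst Bochner_Integration.integral_sum) (auto intro!: mom_int mom_diff mom_mult mom_const momHal momX momS)
  also have "(\<lambda>\<omega>. \<Sum>k=1..n. \<sigma> k * X k \<omega> * hal 1 m (S \<omega>) - (\<sigma> k)^2 * hal 2 m (S \<omega>))
      = (\<lambda>\<omega>. S \<omega> * hal 1 m (S \<omega>) - hal 2 m (S \<omega>))"
    using assms(9) by (simp add: fun_eq_iff sum_subtractf sum_distrib_right[symmetric] S_def)
  also have "\<dots> = (\<lambda>\<omega>. real m * hermite m (S \<omega>))"
    using P2[OF assms(11)] by simp
  also have "(1 / real m) * integral\<^sup>L M (\<lambda>\<omega>. real m * hermite m (S \<omega>)) = integral\<^sup>L M (\<lambda>\<omega>. hermite m (S \<omega>))"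
    using assms(11) by simp
  finally have fin: "integral\<^sup>L M (\<lambda>\<omega>. hermite m (S \<omega>)) =
    (\<Sum>k=1..n. (1 / real m) * (\<Sum>j=1..m. real (m choose j) * integral\<^sup>L M (\<lambda>\<omega>. hermite (m - j) (U k \<omega>)) * real j
        * integral\<^sup>L M (\<lambda>\<omega>. hermite j (X k \<omega>)) * (1 - (\<sigma> k)^2) powr (real (m - j) / 2) * (\<sigma> k) ^ j))" ..
  show ?thesis using fin by (simp only: S_def U_def)
qed

end
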